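(* Let $\Phi$ be a commutative ring with unity $1\ne 0$ and $\Delta=\{\delta_1,\delta_2\}$. Let $S\subseteq\mathbb{N}$ be a recursively enumerable set and let $M$ be a two-tape acyclic Minsky machine with internal states $q_0,q_1,\ldots,q_n$ such that for every $x\in\mathbb{N}$, starting at the configuration $[1,2^{2^x},0]$, $M$ reaches $[0,1,0]$ in finitely many steps if $x\in S$ and operates infinitely if $x\notin S$. Let $A=\Phi\{x_1,x_2,q_0,q_1,\ldots,q_n\}$. For each command $q_i\varepsilon\sigma\to q_jT_\alpha T_\beta$ of $M$ put $$f(i,\varepsilon,\sigma)=x_1^{\varepsilon}x_2^{\sigma}\delta_1^{1-\varepsilon}\delta_2^{1-\sigma}(q_i)-x_1^{\varepsilon}x_2^{\sigma}\delta_1^{1-\varepsilon+\alpha}\delta_2^{1-\sigma+\beta}(q_j)\in A,$$ let $I$ be the differential ideal of $A$ generated by all $f(i,\varepsilon,\sigma)$, let $J$ be the differential ideal of $A$ generated by $\delta_1(x_2)$ and $\delta_2(x_1)$, and for $m\in\mathbb{N}$ put $f_m=x_1x_2\delta_1^{2^{2^m}}(q_1)-x_1x_2\delta_1(q_0)$. Then $f_m\in I+J$ if and only if $m\in S$.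
   Context: $\Phi$ is regarded as a differential ring with $\delta_1,\delta_2$ acting as zero. $\Phi\{y_1,\ldots,y_k\}$ denotes the differential polynomial ring: the polynomial ring over $\Phi$ in algebraically independent variables $\delta_1^a\delta_2^b(y_l)$ ($a,b\ge0$), with $\delta_1,\delta_2$ the commuting derivations determined by $\delta_1(\delta_1^a\delta_2^b(y_l))=\delta_1^{a+1}\delta_2^b(y_l)$, $\delta_2(\delta_1^a\delta_2^b(y_l))=\delta_1^a\delta_2^{b+1}(y_l)$. A differential ideal is an ideal closed under $\delta_1,\delta_2$. A two-tape Minsky machine has two tapes, infinite to the right, with cells numbered $0,1,2,\ldots$; cell $0$ of each tape contains $1$ and all other cells contain $0$. Its head has internal states $q_0,\ldots,q_n$, $q_0$ being terminal. A configuration is a triple $[i,a,b]$: state $q_i$, head observing cell $a$ of tape 1 and cell $b$ of tape 2. The program is a set of commands $q_i\varepsilon\sigma\to q_jT_\alpha T_\beta$ with $1\le i\le n$, $0\le j\le n$, $\varepsilon,\sigma\in\{0,1\}$, $\alpha,\beta\in\{-1,0,1\}$, $\alpha\ge0$ if $\varepsilon=1$, $\beta\ge0$ if $\sigma=1$, with at most one command for each triple $(i,\varepsilon,\sigma)$. Such a command applies to a configuration $[i,a,b]$ with $\varepsilon=1$ iff $a=0$ and $\sigma=1$ iff $b=0$, and produces the configuration $[j,a+\alpha,b+\beta]$ in one step; we write $[i,a,b]\to[j,a+\alpha,b+\beta]$. The machine is acyclic if there is no configuration from which it returns to that same configuration after a positive finite number of steps. (The symbols $q_0,\ldots,q_n$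 are used both as state names and as differential variables of $A$.) *)

theory Defs
  imports "HOL-Library.Poly_Mapping"
begin

text \<open>A differential variable is a triple (l, a, b) standing for
  delta1^a delta2^b (y_l).  Generator indices: y_0 = x_1, y_1 = x_2,
  y_(i+2) = q_i.\<close>

type_synonym dvar = "nat \<times> nat \<times> nat"
type_synonym 'a dpoly = "(dvar \<Rightarrow>\<^sub>0 nat) \<Rightarrow>\<^sub>0 'a"

definition dX :: "dvar \<Rightarrow> 'a::comm_ring_1 dpoly" where
  "dX v = Poly_Mapping.single (Poly_Mapping.single v 1) 1"

text \<open>The derivation extending a shift map on variables (Leibniz rule,
  written out on monomials).\<close>
definition dder :: "(dvar \<Rightarrow> dvar) \<Rightarrow> 'a::comm_ring_1 dpoly \<Rightarrow> 'a dpoly" where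
  "dder sh p = (\<Sum>m\<in>Poly_Mapping.keys p. \<Sum>v\<in>Poly_Mapping.keys (m :: dvar \<Rightarrow>\<^sub>0 nat).
      Poly_Mapping.single (m - Poly_Mapping.single v 1 + Poly_Mapping.single (sh v) 1)
        (Poly_Mapping.lookup p m * of_nat (Poly_Mapping.lookup m v)))"

definition delta1 :: "'a::comm_ring_1 dpoly \<Rightarrow> 'a dpoly" where
  "delta1 = dder (\<lambda>(l, a, b). (l, Suc a, b))"

definition delta2 :: "'a::comm_ring_1 dpoly \<Rightarrow> 'a dpoly" where
  "delta2 = dder (\<lambda>(l, a, b). (l, a, Suc b))"

definition dgen :: "nat \<Rightarrow> 'a::comm_ring_1 dpoly" where
  "dgen l = dX (l, 0, 0)"

definition dD :: "nat \<Rightarrow> nat \<Rightarrow> 'a::comm_ring_1 dpoly \<Rightarrow> 'a dpoly" where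
  "dD a b p = (delta1 ^^ a) ((delta2 ^^ b) p)"

definition ringA :: "nat \<Rightarrow> 'a::comm_ring_1 dpoly set" where
  "ringA n = {p. \<forall>m\<in>Poly_Mapping.keys p. \<forall>v\<in>Poly_Mapping.keys m. fst v \<le> n + 2}"

inductive_set diff_ideal :: "'a::comm_ring_1 dpoly set \<Rightarrow> 'a dpoly set \<Rightarrow> 'a dpoly set"
  for R G where
  gen: "g \<in> G \<Longrightarrow> g \<in> diff_ideal R G"
| zero: "0 \<in> diff_ideal R G"
| add: "x \<in> diff_ideal R G \<Longrightarrow> y \<in> diff_ideal R G \<Longrightarrow> x + y \<in> diff_ideal R G"
| mult: "r \<in> R \<Longrightarrow> x \<in> diff_ideal R G \<Longrightarrow> r * x \<in> diff_ideal R G"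
| d1: "x \<in> diff_ideal R G \<Longrightarrow> delta1 x \<in> diff_ideal R G"
| d2: "x \<in> diff_ideal R G \<Longrightarrow> delta2 x \<in> diff_ideal R G"

text \<open>A program with states q_0..q_n: prog i eps sigma = Some (j, alpha, beta)
  encodes the command q_i eps sigma -> q_j T_alpha T_beta (eps = True means 1).
  Being a function, there is at most one command per triple.\<close>
type_synonym minsky_prog = "nat \<Rightarrow> bool \<Rightarrow> bool \<Rightarrow> (nat \<times> int \<times> int) option"

definition minsky_program :: "nat \<Rightarrow> minsky_prog \<Rightarrow> bool" where
  "minsky_program n P \<longleftrightarrow>
    (\<forall>i e s j \<alpha> \<beta>. P i e s = Some (j, \<alpha>, \<beta>) \<longrightarrow>
       1 \<le> i \<and> i \<le> n \<and> j \<le> n \<and> \<alpha> \<in> {-1, 0, 1} \<and> \<beta> \<in> {-1, 0, 1} \<and>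
       (e \<longrightarrow> \<alpha> \<ge> 0) \<and> (s \<longrightarrow> \<beta> \<ge> 0))"

definition minsky_step :: "minsky_prog \<Rightarrow> ((nat \<times> nat \<times> nat) \<times> (nat \<times> nat \<times> nat)) set" where
  "minsky_step P = {((i, a, b), (j, a', b')). \<exists>\<alpha> \<beta>.
      P i (a = 0) (b = 0) = Some (j, \<alpha>, \<beta>) \<and> int a' = int a + \<alpha> \<and> int b' = int b + \<beta>}"

definition minsky_reaches :: "minsky_prog \<Rightarrow> nat \<times> nat \<times> nat \<Rightarrow> nat \<times> nat \<times> nat \<Rightarrow> bool" where
  "minsky_reaches P c c' \<longleftrightarrow> (c, c') \<in> (minsky_step P)\<^sup>*"

definition minsky_runs_forever :: "minsky_prog \<Rightarrow> nat \<times> nat \<times> nat \<Rightarrow> bool" where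
  "minsky_runs_forever P c \<longleftrightarrow>
    (\<exists>r :: nat \<Rightarrow> nat \<times> nat \<times> nat. r 0 = c \<and> (\<forall>k. (r k, r (Suc k)) \<in> minsky_step P))"

definition fcmd :: "nat \<Rightarrow> bool \<Rightarrow> bool \<Rightarrow> nat \<Rightarrow> int \<Rightarrow> int \<Rightarrow> 'a::comm_ring_1 dpoly" where
  "fcmd i e s j \<alpha> \<beta> =
     (let \<epsilon> = (of_bool e :: nat); \<sigma> = (of_bool s :: nat) in
       dgen 0 ^ \<epsilon> * dgen 1 ^ \<sigma> * dD (1 - \<epsilon>) (1 - \<sigma>) (dgen (i + 2))
     - dgen 0 ^ \<epsilon> * dgen 1 ^ \<sigma> * dD (nat (1 - int \<epsilon> + \<alpha>)) (nat (1 - int \<sigma> + \<beta>)) (dgen (j + 2)))"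

definition idealI :: "nat \<Rightarrow> minsky_prog \<Rightarrow> 'a::comm_ring_1 dpoly set" where
  "idealI n P = diff_ideal (ringA n)
     {fcmd i e s j \<alpha> \<beta> | i e s j \<alpha> \<beta>. P i e s = Some (j, \<alpha>, \<beta>)}"

definition idealJ :: "nat \<Rightarrow> 'a::comm_ring_1 dpoly set" where
  "idealJ n = diff_ideal (ringA n) {delta1 (dgen 1), delta2 (dgen 0)}"

definition fm :: "nat \<Rightarrow> 'a::comm_ring_1 dpoly" where
  "fm m = dgen 0 * dgen 1 * dD (2 ^ 2 ^ m) 0 (dgen (1 + 2))
        - dgen 0 * dgen 1 * dD 1 0 (dgen (0 + 2))"

end

theory Submission
  imports Defs
begin

abbreviation E :: "dvar \<Rightarrow> (dvar \<Rightarrow>\<^sub>0 nat)" where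
  "E v \<equiv> Poly_Mapping.single v (1::nat)"

lemma pm_induct[case_names zero single]:
  assumes "P 0" and "\<And>m c p. P p \<Longrightarrow> P (Poly_Mapping.single m c + p)"
  shows "P p"
proof (induction p rule: update_induct)
  case const then show ?case using assms(1) .
next
  case (update f a b)
  have "Poly_Mapping.update a b f = Poly_Mapping.single a b + f"
    using update(1) by (intro poly_mapping_eqI) (auto simp: lookup_update lookup_add lookup_single in_keys_iff)
  then show ?case using assms(2)[OF update(3)] by simp
qed

lemma additive_eqI:
  fixes F G :: "('b \<Rightarrow>\<^sub>0 'c::comm_monoid_add) \<Rightarrow> 'd::comm_monoid_add"
  assumes "F 0 = 0" "G 0 = 0"
    "\<And>p q. F (p + q) = F p + F q" "\<And>p q. G (p + q) = G p + G q"
    "\<And>m c. F (Poly_Mapping.single m c) = G (Poly_Mapping.single m c)"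
  shows "F p = G p"
  by (induction p rule: pm_induct) (simp_all add: assms)

definition dterm :: "(dvar \<Rightarrow> dvar) \<Rightarrow> (dvar \<Rightarrow>\<^sub>0 nat) \<Rightarrow> 'a::comm_ring_1 \<Rightarrow> 'a dpoly" where
  "dterm sh m c = (\<Sum>v\<in>Poly_Mapping.keys m.
      Poly_Mapping.single (m - E v + E (sh v)) (c * of_nat (Poly_Mapping.lookup m v)))"

lemma dder_alt: "dder sh p = (\<Sum>m\<in>Poly_Mapping.keys p. dterm sh m (Poly_Mapping.lookup p m))"
  unfolding dder_def dterm_def by simp

lemma dterm_0[simp]: "dterm sh m 0 = 0"
  unfolding dterm_def by simp

lemma dterm_add: "dterm sh m (a + b) = dterm sh m a + dterm sh m b"
  unfolding dterm_def by (simp add: sum.distrib[symmetric] single_add distrib_right)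

lemma dder_add: "dder sh (p + q) = dder sh p + dder sh q"
  unfolding dder_alt by (rule setsum_keys_plus_distrib) (simp_all add: dterm_add)

lemma dder_zero[simp]: "dder sh 0 = 0"
  unfolding dder_alt by simp

lemma dder_single: "dder sh (Poly_Mapping.single m c) = dterm sh m c"
  unfolding dder_alt by simp

lemma dder_uminus: "dder sh (- p) = - dder sh p"
proof -
  have "dder sh (p + - p) = dder sh p + dder sh (- p)" by (rule dder_add)
  then show ?thesis by (simp add: eq_neg_iff_add_eq_0 add.commute)
qed

lemma dder_diff: "dder sh (p - q) = dder sh p - dder sh q"
  using dder_add[of sh p "- q"] dder_uminus[of sh q] by simp

lemma dterm_ext:
  assumes "finite K" "Poly_Mapping.keys m \<subseteq> K"
  shows "dterm sh m c = (\<Sum>v\<in>K.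
      Poly_Mapping.single (m - E v + E (sh v)) (c * of_nat (Poly_Mapping.lookup m v)))"
  unfolding dterm_def using assms
  by (intro sum.mono_neutral_left) (auto simp: in_keys_iff)

lemma keys_add_nat: "Poly_Mapping.keys (m1 + m2 :: 'b \<Rightarrow>\<^sub>0 nat) = Poly_Mapping.keys m1 \<union> Poly_Mapping.keys m2"
  by (auto simp: in_keys_iff lookup_add)

lemma minus_add_swap:
  assumes "Poly_Mapping.lookup m v \<ge> 1"
  shows "(m + n) - E v + w = (m - E v + w) + (n :: dvar \<Rightarrow>\<^sub>0 nat)"
  using assms by (intro poly_mapping_eqI) (auto simp: lookup_add lookup_minus lookup_single when_def)

lemma leibniz_single:
  "dder sh (Poly_Mapping.single m1 c1 * Poly_Mapping.single m2 c2 :: 'a::comm_ring_1 dpoly)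
   = dder sh (Poly_Mapping.single m1 c1) * Poly_Mapping.single m2 c2
     + Poly_Mapping.single m1 c1 * dder sh (Poly_Mapping.single m2 c2)"
proof -
  define K where "K = Poly_Mapping.keys m1 \<union> Poly_Mapping.keys m2"
  have fK: "finite K" unfolding K_def by simp
  have "dder sh (Poly_Mapping.single m1 c1 * Poly_Mapping.single m2 c2 :: 'a dpoly)
       = dterm sh (m1 + m2) (c1 * c2)" by (simp add: mult_single dder_single)
  also have "\<dots> = (\<Sum>v\<in>K. Poly_Mapping.single (m1 + m2 - E v + E (sh v))
        (c1 * c2 * of_nat (Poly_Mapping.lookup (m1 + m2) v)))"
    by (rule dterm_ext[OF fK]) (simp add: K_def keys_add_nat)
  also have "\<dots> = (\<Sum>v\<in>K. Poly_Mapping.single (m1 - E v + E (sh v) + m2)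
        (c1 * of_nat (Poly_Mapping.lookup m1 v) * c2)
      + Poly_Mapping.single (m1 + (m2 - E v + E (sh v)))
        (c1 * (c2 * of_nat (Poly_Mapping.lookup m2 v))))"
  proof (rule sum.cong[OF refl])
    fix v
    consider "Poly_Mapping.lookup m1 v = 0" "Poly_Mapping.lookup m2 v = 0"
      | "Poly_Mapping.lookup m1 v = 0" "Poly_Mapping.lookup m2 v \<ge> 1"
      | "Poly_Mapping.lookup m1 v \<ge> 1" "Poly_Mapping.lookup m2 v = 0"
      | "Poly_Mapping.lookup m1 v \<ge> 1" "Poly_Mapping.lookup m2 v \<ge> 1" by linarith
    then show "Poly_Mapping.single (m1 + m2 - E v + E (sh v))
        (c1 * c2 * of_nat (Poly_Mapping.lookup (m1 + m2) v)) =
      Poly_Mapping.single (m1 - E v + E (sh v) + m2)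
        (c1 * of_nat (Poly_Mapping.lookup m1 v) * c2)
      + Poly_Mapping.single (m1 + (m2 - E v + E (sh v)))
        (c1 * (c2 * of_nat (Poly_Mapping.lookup m2 v)))"
    proof cases
      case 1 then show ?thesis by (simp add: lookup_add)
    next
      case 2
      have "m1 + m2 - E v + E (sh v) = m1 + (m2 - E v + E (sh v))"
        using minus_add_swap[OF 2(2), where n=m1 and w="E (sh v)"] by (simp add: add.commute add.left_commute)
      then show ?thesis using 2 by (simp add: lookup_add mult.assoc)
    next
      case 3
      then show ?thesis using minus_add_swap[OF 3(1), where n=m2 and w="E (sh v)"] by (simp add: lookup_add mult_ac)
    next
      case 4
      have a: "m1 + m2 - E v + E (sh v) = m1 + (m2 - E v + E (sh v))"
        using minus_add_swap[OF 4(2), where n=m1 and w="E (sh v)"] by (simp add: add.commute add.left_commute)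
      have b: "m1 + m2 - E v + E (sh v) = m1 - E v + E (sh v) + m2"
        using minus_add_swap[OF 4(1), where n=m2 and w="E (sh v)"] by simp
      show ?thesis using a b
        by (simp add: lookup_add single_add[symmetric] algebra_simps)
    qed
  qed
  also have "\<dots> = (\<Sum>v\<in>K. Poly_Mapping.single (m1 - E v + E (sh v))
        (c1 * of_nat (Poly_Mapping.lookup m1 v))) * Poly_Mapping.single m2 c2
     + Poly_Mapping.single m1 c1 * (\<Sum>v\<in>K. Poly_Mapping.single (m2 - E v + E (sh v))
        (c2 * of_nat (Poly_Mapping.lookup m2 v)))"
    by (simp add: sum.distrib sum_distrib_left sum_distrib_right mult_single)
  also have "\<dots> = dder sh (Poly_Mapping.single m1 c1) * Poly_Mapping.single m2 c2
     + Poly_Mapping.single m1 c1 * dder sh (Poly_Mapping.single m2 c2)"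
    by (simp add: dder_single dterm_ext[OF fK] K_def)
  finally show ?thesis .
qed

lemma leibniz:
  "dder sh (p * q :: 'a::comm_ring_1 dpoly) = dder sh p * q + p * dder sh q"
proof -
  have single_q: "dder sh (Poly_Mapping.single m1 c1 * q :: 'a dpoly)
     = dder sh (Poly_Mapping.single m1 c1) * q + Poly_Mapping.single m1 c1 * dder sh q" for m1 c1
    by (rule additive_eqI[where F="\<lambda>q. dder sh (Poly_Mapping.single m1 c1 * q)"])
       (simp_all add: dder_add distrib_left distrib_right leibniz_single)
  show ?thesis
    by (rule additive_eqI[where F="\<lambda>p. dder sh (p * q)"])
       (simp_all add: dder_add distrib_left distrib_right single_q)
qed


lemma dder_dX: "dder sh (dX v :: 'a::comm_ring_1 dpoly) = dX (sh v)"
  unfolding dX_def dder_single dterm_def by simp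

lemma delta1_dX: "delta1 (dX (l, a, b) :: 'a::comm_ring_1 dpoly) = dX (l, Suc a, b)"
  unfolding delta1_def dder_dX by simp

lemma delta2_dX: "delta2 (dX (l, a, b) :: 'a::comm_ring_1 dpoly) = dX (l, a, Suc b)"
  unfolding delta2_def dder_dX by simp

lemma iter1_dX: "(delta1 ^^ k) (dX (l, a, b) :: 'a::comm_ring_1 dpoly) = dX (l, a + k, b)"
  by (induction k) (simp_all add: delta1_dX)

lemma iter2_dX: "(delta2 ^^ k) (dX (l, a, b) :: 'a::comm_ring_1 dpoly) = dX (l, a, b + k)"
  by (induction k) (simp_all add: delta2_dX)

lemma dD_dX: "dD a b (dX (l, p, q) :: 'a::comm_ring_1 dpoly) = dX (l, p + a, q + b)"
  unfolding dD_def by (simp add: iter1_dX iter2_dX)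

lemma dD_dgen: "dD a b (dgen l :: 'a::comm_ring_1 dpoly) = dX (l, a, b)"
  unfolding dgen_def by (simp add: dD_dX)

lemma delta1_diff: "delta1 (p - q :: 'a::comm_ring_1 dpoly) = delta1 p - delta1 q"
  unfolding delta1_def by (rule dder_diff)
lemma delta2_diff: "delta2 (p - q :: 'a::comm_ring_1 dpoly) = delta2 p - delta2 q"
  unfolding delta2_def by (rule dder_diff)

lemma iter1_diff: "(delta1 ^^ k) (p - q :: 'a::comm_ring_1 dpoly) = (delta1 ^^ k) p - (delta1 ^^ k) q"
  by (induction k) (simp_all add: delta1_diff)
lemma iter2_diff: "(delta2 ^^ k) (p - q :: 'a::comm_ring_1 dpoly) = (delta2 ^^ k) p - (delta2 ^^ k) q"
  by (induction k) (simp_all add: delta2_diff)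

lemma dD_diff: "dD a b (p - q :: 'a::comm_ring_1 dpoly) = dD a b p - dD a b q"
  unfolding dD_def by (simp add: iter1_diff iter2_diff)

lemma delta1_mult: "delta1 (p * q :: 'a::comm_ring_1 dpoly) = delta1 p * q + p * delta1 q"
  unfolding delta1_def by (rule leibniz)
lemma delta2_mult: "delta2 (p * q :: 'a::comm_ring_1 dpoly) = delta2 p * q + p * delta2 q"
  unfolding delta2_def by (rule leibniz)

lemma ringA_0[simp]: "0 \<in> ringA n" unfolding ringA_def by simp
lemma ringA_1[simp]: "1 \<in> ringA n" unfolding ringA_def by simp
lemma ringA_add: "p \<in> ringA n \<Longrightarrow> q \<in> ringA n \<Longrightarrow> p + q \<in> ringA n"
  unfolding ringA_def using keys_add by (smt (verit) UnE mem_Collect_eq subsetD)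
lemma ringA_uminus: "p \<in> ringA n \<Longrightarrow> - p \<in> ringA n"
  unfolding ringA_def by simp
lemma ringA_diff: "p \<in> ringA n \<Longrightarrow> q \<in> ringA n \<Longrightarrow> p - q \<in> ringA n"
  unfolding diff_conv_add_uminus by (intro ringA_add ringA_uminus)
lemma ringA_mult: "p \<in> ringA n \<Longrightarrow> q \<in> ringA n \<Longrightarrow> p * q \<in> ringA n"
  unfolding ringA_def
proof (intro CollectI ballI)
  fix m v
  assume p: "p \<in> {p. \<forall>m\<in>Poly_Mapping.keys p. \<forall>v\<in>Poly_Mapping.keys m. fst v \<le> n + 2}"
    and q: "q \<in> {p. \<forall>m\<in>Poly_Mapping.keys p. \<forall>v\<in>Poly_Mapping.keys m. fst v \<le> n + 2}"
    and m: "m \<in> Poly_Mapping.keys (p * q)" and v: "v \<in> Poly_Mapping.keys m"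
  have "m \<in> {a + b |a b. a \<in> Poly_Mapping.keys p \<and> b \<in> Poly_Mapping.keys q}"
    using subsetD[OF keys_mult m] .
  then obtain a b where ab: "m = a + b" "a \<in> Poly_Mapping.keys p" "b \<in> Poly_Mapping.keys q"
    by blast
  have "v \<in> Poly_Mapping.keys a \<union> Poly_Mapping.keys b" using subsetD[OF keys_add] v ab(1) by simp
  moreover have "\<forall>v\<in>Poly_Mapping.keys a. fst v \<le> n + 2" using p ab(2) by simp
  moreover have "\<forall>v\<in>Poly_Mapping.keys b. fst v \<le> n + 2" using q ab(3) by simp
  ultimately show "fst v \<le> n + 2" by blast
qed
lemma ringA_dX: "fst v \<le> n + 2 \<Longrightarrow> dX v \<in> ringA n"
  unfolding ringA_def dX_def by simp

lemma di_uminus: "x \<in> diff_ideal (ringA n) G \<Longrightarrow> - x \<in> diff_ideal (ringA n) G"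
proof -
  assume "x \<in> diff_ideal (ringA n) G"
  then have "(- 1) * x \<in> diff_ideal (ringA n) G"
    by (rule diff_ideal.mult[OF ringA_uminus[OF ringA_1]])
  then show ?thesis by simp
qed
lemma di_diff: "x \<in> diff_ideal (ringA n) G \<Longrightarrow> y \<in> diff_ideal (ringA n) G \<Longrightarrow> x - y \<in> diff_ideal (ringA n) G"
  unfolding diff_conv_add_uminus by (intro diff_ideal.add di_uminus)
lemma di_iter1: "x \<in> diff_ideal R G \<Longrightarrow> (delta1 ^^ k) x \<in> diff_ideal R G"
  by (induction k) (auto intro: diff_ideal.d1)
lemma di_iter2: "x \<in> diff_ideal R G \<Longrightarrow> (delta2 ^^ k) x \<in> diff_ideal R G"
  by (induction k) (auto intro: diff_ideal.d2)
lemma di_dD: "x \<in> diff_ideal R G \<Longrightarrow> dD a b x \<in> diff_ideal R G"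
  unfolding dD_def by (intro di_iter1 di_iter2)

lemma J2:
  assumes "\<And>k. (delta2 ^^ k) h \<in> ringA n"
  shows "(delta2 ^^ k) (dgen 0 * h) - dgen 0 * (delta2 ^^ k) h \<in> (idealJ n :: 'a::comm_ring_1 dpoly set)"
proof (induction k)
  case 0 then show ?case by (simp add: idealJ_def diff_ideal.zero)
next
  case (Suc k)
  define D where "D = (delta2 ^^ k) (dgen 0 * h :: 'a dpoly)"
  define H where "H = (delta2 ^^ k) h"
  have "delta2 (D - dgen 0 * H) \<in> idealJ n" using Suc unfolding D_def H_def idealJ_def
    by (rule diff_ideal.d2)
  moreover have "H * delta2 (dgen 0) \<in> idealJ n"
    unfolding idealJ_def H_def by (rule diff_ideal.mult[OF assms diff_ideal.gen]) simp
  ultimately have "delta2 (D - dgen 0 * H) + H * delta2 (dgen 0) \<in> idealJ n"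
    unfolding idealJ_def by (rule diff_ideal.add)
  moreover have "delta2 (D - dgen 0 * H) + H * delta2 (dgen 0) = delta2 D - dgen 0 * delta2 H"
    unfolding delta2_diff delta2_mult by (simp add: algebra_simps)
  ultimately have X: "delta2 D - dgen 0 * delta2 H \<in> idealJ n" by (simp only:)
  have eq: "(delta2 ^^ Suc k) (dgen 0 * h) - dgen 0 * (delta2 ^^ Suc k) h = delta2 D - dgen 0 * delta2 H"
    by (simp only: funpow.simps o_apply D_def H_def)
  show ?case unfolding eq by (rule X)
qed

lemma J1:
  assumes "\<And>k. (delta1 ^^ k) h \<in> ringA n"
  shows "(delta1 ^^ k) (dgen 1 * h) - dgen 1 * (delta1 ^^ k) h \<in> (idealJ n :: 'a::comm_ring_1 dpoly set)"
proof (induction k)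
  case 0 then show ?case by (simp add: idealJ_def diff_ideal.zero)
next
  case (Suc k)
  define D where "D = (delta1 ^^ k) (dgen 1 * h :: 'a dpoly)"
  define H where "H = (delta1 ^^ k) h"
  have "delta1 (D - dgen 1 * H) \<in> idealJ n" using Suc unfolding D_def H_def idealJ_def
    by (rule diff_ideal.d1)
  moreover have "H * delta1 (dgen 1) \<in> idealJ n"
    unfolding idealJ_def H_def by (rule diff_ideal.mult[OF assms diff_ideal.gen]) simp
  ultimately have "delta1 (D - dgen 1 * H) + H * delta1 (dgen 1) \<in> idealJ n"
    unfolding idealJ_def by (rule diff_ideal.add)
  moreover have "delta1 (D - dgen 1 * H) + H * delta1 (dgen 1) = delta1 D - dgen 1 * delta1 H"
    unfolding delta1_diff delta1_mult by (simp add: algebra_simps)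
  ultimately have X: "delta1 D - dgen 1 * delta1 H \<in> idealJ n" by (simp only:)
  have eq: "(delta1 ^^ Suc k) (dgen 1 * h) - dgen 1 * (delta1 ^^ Suc k) h = delta1 D - dgen 1 * delta1 H"
    by (simp only: funpow.simps o_apply D_def H_def)
  show ?case unfolding eq by (rule X)
qed


definition Yc :: "nat \<times> nat \<times> nat \<Rightarrow> 'a::comm_ring_1 dpoly" where
  "Yc c = (case c of (i, a, b) \<Rightarrow> dgen 0 * dgen 1 * dX (i + 2, a, b))"

definition IJ :: "nat \<Rightarrow> minsky_prog \<Rightarrow> 'a::comm_ring_1 dpoly set" where
  "IJ n P = {a + b | a b. a \<in> idealI n P \<and> b \<in> idealJ n}"

lemma IJ_I: "u \<in> idealI n P \<Longrightarrow> w \<in> idealJ n \<Longrightarrow> u + w \<in> IJ n P"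
  unfolding IJ_def by blast

lemma IJ_add: "u \<in> IJ n P \<Longrightarrow> w \<in> IJ n P \<Longrightarrow> u + w \<in> IJ n P"
proof -
  assume "u \<in> IJ n P" "w \<in> IJ n P"
  then obtain a b c d where "u = a + b" "w = c + d" "a \<in> idealI n P" "b \<in> idealJ n"
    "c \<in> idealI n P" "d \<in> idealJ n" unfolding IJ_def by blast
  moreover have "a + b + (c + d) = (a + c) + (b + d)" by (simp add: algebra_simps)
  moreover have "a + c \<in> idealI n P" using \<open>a \<in> idealI n P\<close> \<open>c \<in> idealI n P\<close>
    unfolding idealI_def by (rule diff_ideal.add)
  moreover have "b + d \<in> idealJ n" using \<open>b \<in> idealJ n\<close> \<open>d \<in> idealJ n\<close>
    unfolding idealJ_def by (rule diff_ideal.add)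
  ultimately show ?thesis using IJ_I[of "a + c" n P "b + d"] by (simp add: algebra_simps)
qed

lemma ringA_x1x2: "dgen 0 * dgen 1 \<in> ringA n"
  unfolding dgen_def by (intro ringA_mult ringA_dX) simp_all

lemma ringA_mx2: "- dgen 1 \<in> ringA n" "- dgen 0 \<in> ringA n"
  unfolding dgen_def by (intro ringA_uminus ringA_dX; simp)+

lemma ring_aux: "(y::'b::comm_ring_1) * D + (- y) * (D - x * H) = x * y * H"
  by (simp add: algebra_simps)

lemma J0: "0 \<in> idealJ n" unfolding idealJ_def by (rule diff_ideal.zero)

lemma step_IJ:
  assumes prog: "minsky_program n P"
    and st: "((i, a, b), (j, a', b')) \<in> minsky_step P"
  shows "(Yc (i, a, b) - Yc (j, a', b') :: 'a::comm_ring_1 dpoly) \<in> IJ n P"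
proof -
  from st obtain \<alpha> \<beta> where P: "P i (a = 0) (b = 0) = Some (j, \<alpha>, \<beta>)"
    and a': "int a' = int a + \<alpha>" and b': "int b' = int b + \<beta>"
    unfolding minsky_step_def by blast
  from prog P have ij: "i \<le> n" "j \<le> n" and al: "\<alpha> \<in> {-1, 0, 1}" and be: "\<beta> \<in> {-1, 0, 1}"
    and ae: "a = 0 \<longrightarrow> \<alpha> \<ge> 0" and bs: "b = 0 \<longrightarrow> \<beta> \<ge> 0"
    unfolding minsky_program_def by blast+
  define g :: "'a dpoly" where "g = fcmd i (a = 0) (b = 0) j \<alpha> \<beta>"
  have gI: "g \<in> idealI n P" unfolding g_def idealI_def
    by (rule diff_ideal.gen) (use P in blast)
  have rX: "dX (i + 2, p, q) - dX (j + 2, p', q') \<in> ringA n" for p q p' q'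
    using ij by (intro ringA_diff ringA_dX) simp_all
  consider "a > 0" "b > 0" | "a = 0" "b > 0" | "a > 0" "b = 0" | "a = 0" "b = 0" by blast
  then show ?thesis
  proof cases
    case 1
    have g: "g = dX (i + 2, 1, 1) - dX (j + 2, nat (1 + \<alpha>), nat (1 + \<beta>))"
      using 1 by (simp add: g_def fcmd_def dD_dgen)
    have e1: "nat (1 + \<alpha>) + (a - 1) = a'" using 1 a' al by auto
    have e2: "nat (1 + \<beta>) + (b - 1) = b'" using 1 b' be by auto
    have eq: "dD (a - 1) (b - 1) g = dX (i + 2, a, b) - dX (j + 2, a', b')"
      using 1 e1 e2 by (simp add: g dD_diff dD_dX)
    have D: "dD (a - 1) (b - 1) g \<in> idealI n P"
      using gI unfolding idealI_def by (rule di_dD)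
    have "(dgen 0 * dgen 1) * dD (a - 1) (b - 1) g \<in> idealI n P"
      using diff_ideal.mult[OF ringA_x1x2 D[unfolded idealI_def]] unfolding idealI_def .
    then have "(dgen 0 * dgen 1) * (dX (i + 2, a, b) - dX (j + 2, a', b') :: 'a dpoly) \<in> idealI n P"
      unfolding eq .
    then have "(dgen 0 * dgen 1) * (dX (i + 2, a, b) - dX (j + 2, a', b') :: 'a dpoly) + 0 \<in> IJ n P"
      by (rule IJ_I[OF _ J0])
    moreover have "(Yc (i, a, b) - Yc (j, a', b') :: 'a dpoly) = (dgen 0 * dgen 1) * (dX (i + 2, a, b) - dX (j + 2, a', b')) + 0"
      unfolding Yc_def by (simp add: right_diff_distrib)
    ultimately show ?thesis by (simp only:)
  next
    case 2
    define h :: "'a dpoly" where "h = dX (i + 2, 0, 1) - dX (j + 2, nat \<alpha>, nat (1 + \<beta>))"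
    have g: "g = dgen 0 * h"
      using 2 by (simp add: g_def fcmd_def dD_dgen h_def algebra_simps)
    have hk: "(delta2 ^^ k) h \<in> ringA n" for k
      unfolding h_def iter2_diff iter2_dX by (rule rX)
    have E: "(delta2 ^^ (b - 1)) (dgen 0 * h) - dgen 0 * (delta2 ^^ (b - 1)) h \<in> (idealJ n :: 'a dpoly set)"
      by (rule J2[OF hk])
    have D: "(delta2 ^^ (b - 1)) g \<in> idealI n P"
      using gI unfolding idealI_def by (rule di_iter2)
    have "dgen 1 * (delta2 ^^ (b - 1)) g \<in> idealI n P"
      using D unfolding idealI_def by (rule diff_ideal.mult[rotated]) (simp add: dgen_def ringA_dX)
    moreover have "(- dgen 1) * ((delta2 ^^ (b - 1)) (dgen 0 * h) - dgen 0 * (delta2 ^^ (b - 1)) h) \<in> idealJ n"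
      using E unfolding idealJ_def by (rule diff_ideal.mult[rotated]) (rule ringA_mx2)
    ultimately have X: "dgen 1 * (delta2 ^^ (b - 1)) g + (- dgen 1) * ((delta2 ^^ (b - 1)) (dgen 0 * h) - dgen 0 * (delta2 ^^ (b - 1)) h) \<in> IJ n P"
      by (rule IJ_I)
    have e1: "nat \<alpha> = a'" using 2 a' by auto
    have e2: "nat (1 + \<beta>) + (b - 1) = b'" using 2 b' be by auto
    have hh: "(delta2 ^^ (b - 1)) h = dX (i + 2, 0, b) - dX (j + 2, a', b')"
      unfolding h_def iter2_diff iter2_dX using 2 e1 e2 by simp
    have "(Yc (i, a, b) - Yc (j, a', b') :: 'a dpoly) = dgen 0 * dgen 1 * (delta2 ^^ (b - 1)) h"
      unfolding hh Yc_def using 2 by (simp add: right_diff_distrib)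
    also have "\<dots> = dgen 1 * (delta2 ^^ (b - 1)) g + (- dgen 1) * ((delta2 ^^ (b - 1)) (dgen 0 * h) - dgen 0 * (delta2 ^^ (b - 1)) h)"
      unfolding g ring_aux by (simp only: mult_ac)
    finally show ?thesis using X by (simp only:)
  next
    case 3
    define h :: "'a dpoly" where "h = dX (i + 2, 1, 0) - dX (j + 2, nat (1 + \<alpha>), nat \<beta>)"
    have g: "g = dgen 1 * h"
      using 3 by (simp add: g_def fcmd_def dD_dgen h_def algebra_simps)
    have hk: "(delta1 ^^ k) h \<in> ringA n" for k
      unfolding h_def iter1_diff iter1_dX by (rule rX)
    have E: "(delta1 ^^ (a - 1)) (dgen 1 * h) - dgen 1 * (delta1 ^^ (a - 1)) h \<in> (idealJ n :: 'a dpoly set)"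
      by (rule J1[OF hk])
    have D: "(delta1 ^^ (a - 1)) g \<in> idealI n P"
      using gI unfolding idealI_def by (rule di_iter1)
    have "dgen 0 * (delta1 ^^ (a - 1)) g \<in> idealI n P"
      using D unfolding idealI_def by (rule diff_ideal.mult[rotated]) (simp add: dgen_def ringA_dX)
    moreover have "(- dgen 0) * ((delta1 ^^ (a - 1)) (dgen 1 * h) - dgen 1 * (delta1 ^^ (a - 1)) h) \<in> idealJ n"
      using E unfolding idealJ_def by (rule diff_ideal.mult[rotated]) (rule ringA_mx2)
    ultimately have X: "dgen 0 * (delta1 ^^ (a - 1)) g + (- dgen 0) * ((delta1 ^^ (a - 1)) (dgen 1 * h) - dgen 1 * (delta1 ^^ (a - 1)) h) \<in> IJ n P"
      by (rule IJ_I)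
    have e1: "nat (1 + \<alpha>) + (a - 1) = a'" using 3 a' al by auto
    have e2: "nat \<beta> = b'" using 3 b' by auto
    have hh: "(delta1 ^^ (a - 1)) h = dX (i + 2, a, 0) - dX (j + 2, a', b')"
      unfolding h_def iter1_diff iter1_dX using 3 e1 e2 by simp
    have "(Yc (i, a, b) - Yc (j, a', b') :: 'a dpoly) = dgen 0 * dgen 1 * (delta1 ^^ (a - 1)) h"
      unfolding hh Yc_def using 3 by (simp add: right_diff_distrib)
    also have "\<dots> = dgen 0 * (delta1 ^^ (a - 1)) g + (- dgen 0) * ((delta1 ^^ (a - 1)) (dgen 1 * h) - dgen 1 * (delta1 ^^ (a - 1)) h)"
      unfolding g ring_aux by (simp only: mult_ac)
    finally show ?thesis using X by (simp only:)
  next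
    case 4
    have e1: "nat \<alpha> = a'" using 4 a' by auto
    have e2: "nat \<beta> = b'" using 4 b' by auto
    have g: "g = Yc (i, a, b) - Yc (j, a', b')"
      using 4 e1 e2 by (simp add: g_def fcmd_def dD_dgen Yc_def algebra_simps)
    have "g + 0 \<in> IJ n P" by (rule IJ_I[OF gI J0])
    then show ?thesis unfolding g by (simp only: add_0_right)
  qed
qed

lemma reach_IJ:
  assumes prog: "minsky_program n P"
    and "(c, c') \<in> (minsky_step P)\<^sup>*"
  shows "(Yc c - Yc c' :: 'a::comm_ring_1 dpoly) \<in> IJ n P"
  using assms(2)
proof (induction rule: rtrancl_induct)
  case base
  have "0 \<in> idealI n P" unfolding idealI_def by (rule diff_ideal.zero)
  from IJ_I[OF this J0] show ?case by simp
next
  case (step y z)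
  obtain i a b where y: "y = (i, a, b)" by (cases y) auto
  obtain j a' b' where z: "z = (j, a', b')" by (cases z) auto
  have "Yc y - Yc z \<in> IJ n P" using step_IJ[OF prog step(2)[unfolded y z]] y z by simp
  from IJ_add[OF step(3) this] show ?case by simp
qed

lemma fm_Yc: "fm m = Yc (1, 2 ^ 2 ^ m, 0) - Yc (0, 1, 0)"
  unfolding fm_def Yc_def by (simp add: dD_dgen)


definition mon :: "nat \<Rightarrow> nat \<Rightarrow> nat \<Rightarrow> nat \<Rightarrow> nat \<Rightarrow> (dvar \<Rightarrow>\<^sub>0 nat)" where
  "mon c d k a b = E (0, c, 0) + E (1, 0, d) + E (k + 2, a, b)"

lemma lookup_mon: "Poly_Mapping.lookup (mon c d k a b) u =
   (if u = (0, c, 0) then 1 else 0) + (if u = (1, 0, d) then 1 else 0) + (if u = (k + 2, a, b) then 1 else 0)"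
  unfolding mon_def by (simp add: lookup_add lookup_single when_def)

lemma mon_keys: "Poly_Mapping.lookup (mon c d k a b) u \<noteq> 0 \<Longrightarrow> u = (0, c, 0) \<or> u = (1, 0, d) \<or> u = (k + 2, a, b)"
  unfolding lookup_mon by (auto split: if_splits)

lemma mon_inj:
  assumes "mon c d k a b = mon c' d' k' a' b'"
  shows "c = c' \<and> d = d' \<and> k = k' \<and> a = a' \<and> b = b'"
proof -
  have l: "Poly_Mapping.lookup (mon c' d' k' a' b') u \<noteq> 0" if "u \<in> {(0, c, 0), (1, 0, d), (k + 2, a, b)}" for u
    using that unfolding assms[symmetric] lookup_mon by auto
  from mon_keys[OF l[of "(0, c, 0)"]] have "c = c'" by auto
  moreover from mon_keys[OF l[of "(1, 0, d)"]] have "d = d'" by auto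
  moreover from mon_keys[OF l[of "(k + 2, a, b)"]] have "k = k' \<and> a = a' \<and> b = b'" by auto
  ultimately show ?thesis by simp
qed

definition Lmon :: "(nat \<times> nat \<times> nat \<Rightarrow> 'a::comm_ring_1) \<Rightarrow> (dvar \<Rightarrow>\<^sub>0 nat) \<Rightarrow> 'a" where
  "Lmon \<psi> m = (if (\<exists>c d k a b. m = mon c d k a b)
     then (THE r. \<exists>c d k a b. m = mon c d k a b \<and> r = (-1) ^ (c + d) * \<psi> (k, a + c, b + d)) else 0)"

lemma Lmon_mon: "Lmon \<psi> (mon c d k a b) = (-1) ^ (c + d) * \<psi> (k, a + c, b + d)"
proof -
  have "(THE r. \<exists>c' d' k' a' b'. mon c d k a b = mon c' d' k' a' b' \<and> r = (-1) ^ (c' + d') * \<psi> (k', a' + c', b' + d'))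
     = (-1) ^ (c + d) * \<psi> (k, a + c, b + d)"
  proof (rule the_equality)
    show "\<exists>c' d' k' a' b'. mon c d k a b = mon c' d' k' a' b' \<and> (-1) ^ (c + d) * \<psi> (k, a + c, b + d) = (-1) ^ (c' + d') * \<psi> (k', a' + c', b' + d')"
      by blast
  next
    fix r assume "\<exists>c' d' k' a' b'. mon c d k a b = mon c' d' k' a' b' \<and> r = (-1) ^ (c' + d') * \<psi> (k', a' + c', b' + d')"
    then obtain c' d' k' a' b' where "mon c d k a b = mon c' d' k' a' b'" "r = (-1) ^ (c' + d') * \<psi> (k', a' + c', b' + d')"
      by blast
    then show "r = (-1) ^ (c + d) * \<psi> (k, a + c, b + d)" using mon_inj by metis
  qed
  note th = this
  have ex: "\<exists>c' d' k' a' b'. mon c d k a b = mon c' d' k' a' b'" by blast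
  show ?thesis unfolding Lmon_def if_P[OF ex] by (rule th)
qed

lemma Lmon_other: "(\<And>c d k a b. m \<noteq> mon c d k a b) \<Longrightarrow> Lmon \<psi> m = 0"
  unfolding Lmon_def by auto

lemma Lmon_bad1:
  assumes "Poly_Mapping.lookup m (1, Suc x, y) \<noteq> 0" shows "Lmon \<psi> m = 0"
proof (rule Lmon_other)
  fix c d k a b
  show "m \<noteq> mon c d k a b"
  proof
    assume "m = mon c d k a b"
    with assms have "Poly_Mapping.lookup (mon c d k a b) (1, Suc x, y) \<noteq> 0" by simp
    from mon_keys[OF this] show False by simp
  qed
qed

lemma Lmon_bad2:
  assumes "Poly_Mapping.lookup m (0, x, Suc y) \<noteq> 0" shows "Lmon \<psi> m = 0"
proof (rule Lmon_other)
  fix c d k a b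
  show "m \<noteq> mon c d k a b"
  proof
    assume "m = mon c d k a b"
    with assms have "Poly_Mapping.lookup (mon c d k a b) (0, x, Suc y) \<noteq> 0" by simp
    from mon_keys[OF this] show False by simp
  qed
qed

definition Lf :: "(nat \<times> nat \<times> nat \<Rightarrow> 'a::comm_ring_1) \<Rightarrow> 'a dpoly \<Rightarrow> 'a" where
  "Lf \<psi> p = (\<Sum>m\<in>Poly_Mapping.keys p. Poly_Mapping.lookup p m * Lmon \<psi> m)"

lemma Lf_add: "Lf \<psi> (p + q) = Lf \<psi> p + Lf \<psi> q"
  unfolding Lf_def by (rule setsum_keys_plus_distrib) (simp_all add: distrib_right)

lemma Lf_zero[simp]: "Lf \<psi> 0 = 0"
  unfolding Lf_def by simp

lemma Lf_single: "Lf \<psi> (Poly_Mapping.single m c) = c * Lmon \<psi> m"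
  unfolding Lf_def by simp

lemma Lf_uminus: "Lf \<psi> (- p) = - Lf \<psi> p"
proof -
  have "Lf \<psi> (p + - p) = Lf \<psi> p + Lf \<psi> (- p)" by (rule Lf_add)
  then show ?thesis by (simp add: eq_neg_iff_add_eq_0 add.commute)
qed

lemma Lf_diff: "Lf \<psi> (p - q) = Lf \<psi> p - Lf \<psi> q"
  using Lf_add[of \<psi> p "- q"] Lf_uminus[of \<psi> q] by simp

lemma Lf_sum: "Lf \<psi> (\<Sum>v\<in>K. f v) = (\<Sum>v\<in>K. Lf \<psi> (f v))"
  by (induction K rule: infinite_finite_induct) (simp_all add: Lf_add)

lemma mE_E: "Poly_Mapping.lookup m v \<ge> 1 \<Longrightarrow> m - E v + E v = (m :: dvar \<Rightarrow>\<^sub>0 nat)"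
  by (intro poly_mapping_eqI) (auto simp add: lookup_add lookup_minus lookup_single when_def)

lemma back_eq:
  assumes "Poly_Mapping.lookup m v \<ge> 1" "m - E v + E w = M"
  shows "m = M - E w + E v"
proof -
  have "M - E w = m - E v" using assms(2) by auto
  then show ?thesis using mE_E[OF assms(1)] by simp
qed

lemma swap1: "mon c d k a b - E (0, c, 0) + E (0, c', 0) = mon c' d k a b"
  unfolding mon_def by (intro poly_mapping_eqI) (simp add: lookup_add lookup_minus lookup_single when_def)

lemma swap2: "mon c d k a b - E (1, 0, d) + E (1, 0, d') = mon c d' k a b"
  unfolding mon_def by (intro poly_mapping_eqI) (simp add: lookup_add lookup_minus lookup_single when_def)

lemma swap3: "mon c d k a b - E (k + 2, a, b) + E (k' + 2, a', b') = mon c d k' a' b'"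
  unfolding mon_def by (intro poly_mapping_eqI) (simp add: lookup_add lookup_minus lookup_single when_def)

lemma keys_mon: "Poly_Mapping.keys (mon c d k a b) = {(0, c, 0), (1, 0, d), (k + 2, a, b)}"
  by (auto simp: in_keys_iff lookup_mon split: if_splits)

lemma lookup_mon_1: "u \<in> {(0, c, 0), (1, 0, d), (k + 2, a, b)} \<Longrightarrow> Poly_Mapping.lookup (mon c d k a b) u = 1"
  by (auto simp: lookup_mon)


lemma lookup_plusE: "Poly_Mapping.lookup (X + E u) u \<noteq> 0"
  by (simp add: lookup_add)

lemma D1sum:
  "(\<Sum>v\<in>Poly_Mapping.keys m. of_nat (Poly_Mapping.lookup m v) *
      Lmon \<psi> (m - E v + E ((\<lambda>(l, a, b). (l, Suc a, b)) v))) = (0::'a::comm_ring_1)"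
proof (cases "\<exists>c d k a b. m = mon c d k a b")
  case True
  then obtain c d k a b where m: "m = mon c d k a b" by blast
  have t2: "Lmon \<psi> (mon c d k a b - E (1, 0, d) + E (1, Suc 0, d)) = (0::'a)"
    by (rule Lmon_bad1[OF lookup_plusE])
  have t1: "Lmon \<psi> (mon c d k a b - E (0, c, 0) + E (0, Suc c, 0)) = ((-1) ^ (Suc c + d) * \<psi> (k, a + Suc c, b + d) :: 'a)"
    by (simp only: swap1 Lmon_mon)
  have t3: "Lmon \<psi> (mon c d k a b - E (k + 2, a, b) + E (k + 2, Suc a, b)) = ((-1) ^ (c + d) * \<psi> (k, Suc a + c, b + d) :: 'a)"
    by (simp only: swap3 Lmon_mon)
  show ?thesis unfolding m keys_mon using t1 t2 t3
    by (simp add: lookup_mon_1)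
next
  case False
  show ?thesis
  proof (rule sum.neutral, rule ballI)
    fix v assume v: "v \<in> Poly_Mapping.keys m"
    obtain l x y where vv: "v = (l, x, y)" by (cases v) auto
    have "Lmon \<psi> (m - E v + E (l, Suc x, y)) = (0::'a)"
    proof (rule ccontr)
      assume ne: "Lmon \<psi> (m - E v + E (l, Suc x, y)) \<noteq> (0::'a)"
      have "\<exists>c d k a b. m - E v + E (l, Suc x, y) = mon c d k a b"
        using ne Lmon_other by blast
      then obtain c d k a b where M: "m - E v + E (l, Suc x, y) = mon c d k a b" by blast
      have m1: "Poly_Mapping.lookup m v \<ge> 1" using v by (simp add: in_keys_iff)
      have mb: "m = mon c d k a b - E (l, Suc x, y) + E v" by (rule back_eq[OF m1 M])
      have "Poly_Mapping.lookup (mon c d k a b) (l, Suc x, y) \<noteq> 0"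
        unfolding M[symmetric] by (rule lookup_plusE)
      from mon_keys[OF this] show False
      proof (elim disjE)
        assume "(l, Suc x, y) = (0, c, 0)"
        then have "m = mon x d k a b" using mb swap1[of c d k a b x] vv by simp
        then show False using False by blast
      next
        assume "(l, Suc x, y) = (1, 0, d)" then show False by simp
      next
        assume "(l, Suc x, y) = (k + 2, a, b)"
        then have "m = mon c d k x b" using mb swap3[of c d k a b k x b] vv by simp
        then show False using False by blast
      qed
    qed
    then show "of_nat (Poly_Mapping.lookup m v) * Lmon \<psi> (m - E v + E ((\<lambda>(l, a, b). (l, Suc a, b)) v)) = (0::'a)"
      using vv by simp
  qed
qed

lemma D2sum:
  "(\<Sum>v\<in>Poly_Mapping.keys m. of_nat (Poly_Mapping.lookup m v) *
      Lmon \<psi> (m - E v + E ((\<lambda>(l, a, b). (l, a, Suc b)) v))) = (0::'a::comm_ring_1)"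
proof (cases "\<exists>c d k a b. m = mon c d k a b")
  case True
  then obtain c d k a b where m: "m = mon c d k a b" by blast
  have t1: "Lmon \<psi> (mon c d k a b - E (0, c, 0) + E (0, c, Suc 0)) = (0::'a)"
    by (rule Lmon_bad2[OF lookup_plusE])
  have t2: "Lmon \<psi> (mon c d k a b - E (1, 0, d) + E (1, 0, Suc d)) = ((-1) ^ (c + Suc d) * \<psi> (k, a + c, b + Suc d) :: 'a)"
    by (simp only: swap2 Lmon_mon)
  have t3: "Lmon \<psi> (mon c d k a b - E (k + 2, a, b) + E (k + 2, a, Suc b)) = ((-1) ^ (c + d) * \<psi> (k, a + c, Suc b + d) :: 'a)"
    by (simp only: swap3 Lmon_mon)
  show ?thesis unfolding m keys_mon using t1 t2 t3
    by (simp add: lookup_mon_1)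
next
  case False
  show ?thesis
  proof (rule sum.neutral, rule ballI)
    fix v assume v: "v \<in> Poly_Mapping.keys m"
    obtain l x y where vv: "v = (l, x, y)" by (cases v) auto
    have "Lmon \<psi> (m - E v + E (l, x, Suc y)) = (0::'a)"
    proof (rule ccontr)
      assume ne: "Lmon \<psi> (m - E v + E (l, x, Suc y)) \<noteq> (0::'a)"
      have "\<exists>c d k a b. m - E v + E (l, x, Suc y) = mon c d k a b"
        using ne Lmon_other by blast
      then obtain c d k a b where M: "m - E v + E (l, x, Suc y) = mon c d k a b" by blast
      have m1: "Poly_Mapping.lookup m v \<ge> 1" using v by (simp add: in_keys_iff)
      have mb: "m = mon c d k a b - E (l, x, Suc y) + E v" by (rule back_eq[OF m1 M])
      have "Poly_Mapping.lookup (mon c d k a b) (l, x, Suc y) \<noteq> 0"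
        unfolding M[symmetric] by (rule lookup_plusE)
      from mon_keys[OF this] show False
      proof (elim disjE)
        assume "(l, x, Suc y) = (0, c, 0)" then show False by simp
      next
        assume "(l, x, Suc y) = (1, 0, d)"
        then have "m = mon c y k a b" using mb swap2[of c d k a b y] vv by simp
        then show False using False by blast
      next
        assume "(l, x, Suc y) = (k + 2, a, b)"
        then have "m = mon c d k a y" using mb swap3[of c d k a b k a y] vv by simp
        then show False using False by blast
      qed
    qed
    then show "of_nat (Poly_Mapping.lookup m v) * Lmon \<psi> (m - E v + E ((\<lambda>(l, a, b). (l, a, Suc b)) v)) = (0::'a)"
      using vv by simp
  qed
qed

lemma Lf_dterm: "Lf \<psi> (dterm sh m c) =
   c * (\<Sum>v\<in>Poly_Mapping.keys m. of_nat (Poly_Mapping.lookup m v) * Lmon \<psi> (m - E v + E (sh v)))"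
  unfolding dterm_def Lf_sum Lf_single by (simp add: sum_distrib_left mult_ac)

lemma Lf_delta1: "Lf \<psi> (delta1 p) = 0"
proof (rule additive_eqI[where F="\<lambda>p. Lf \<psi> (delta1 p)" and G="\<lambda>p. 0"])
  fix m c show "Lf \<psi> (delta1 (Poly_Mapping.single m c)) = 0"
    unfolding delta1_def dder_single Lf_dterm D1sum by simp
qed (simp_all add: delta1_def dder_add Lf_add)

lemma Lf_delta2: "Lf \<psi> (delta2 p) = 0"
proof (rule additive_eqI[where F="\<lambda>p. Lf \<psi> (delta2 p)" and G="\<lambda>p. 0"])
  fix m c show "Lf \<psi> (delta2 (Poly_Mapping.single m c)) = 0"
    unfolding delta2_def dder_single Lf_dterm D2sum by simp
qed (simp_all add: delta2_def dder_add Lf_add)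

lemma ideal_V:
  assumes G: "\<And>g r. g \<in> G \<Longrightarrow> Lf \<psi> (r * g) = 0"
    and x: "x \<in> diff_ideal R G"
  shows "Lf \<psi> (r * x) = 0"
  using x
proof (induction arbitrary: r)
  case (gen g) then show ?case using G by blast
next
  case zero then show ?case by simp
next
  case (add x y) then show ?case by (simp add: distrib_left Lf_add)
next
  case (mult s x) then show ?case by (metis mult.assoc)
next
  case (d1 x)
  have "r * delta1 x = delta1 (r * x) - delta1 r * x" by (simp add: delta1_mult)
  then show ?case using d1.IH by (simp add: Lf_diff Lf_delta1)
next
  case (d2 x)
  have "r * delta2 x = delta2 (r * x) - delta2 r * x" by (simp add: delta2_mult)
  then show ?case using d2.IH by (simp add: Lf_diff Lf_delta2)
qed

lemma gen_pair:
  assumes "\<And>m. Lmon \<psi> (m + M1) = Lmon \<psi> (m + M2)"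
  shows "Lf \<psi> (r * (Poly_Mapping.single M1 1 - Poly_Mapping.single M2 1)) = 0"
  by (rule additive_eqI[where F="\<lambda>r. Lf \<psi> (r * (Poly_Mapping.single M1 1 - Poly_Mapping.single M2 1))" and G="\<lambda>p. 0"])
     (simp_all add: distrib_right Lf_add right_diff_distrib Lf_diff mult_single Lf_single assms)

lemma gen_one:
  assumes "\<And>m. Lmon \<psi> (m + M1) = 0"
  shows "Lf \<psi> (r * Poly_Mapping.single M1 1) = 0"
  by (rule additive_eqI[where F="\<lambda>r. Lf \<psi> (r * Poly_Mapping.single M1 1)" and G="\<lambda>p. 0"])
     (simp_all add: distrib_right Lf_add mult_single Lf_single assms)


definition Zm :: "bool \<Rightarrow> bool \<Rightarrow> (dvar \<Rightarrow>\<^sub>0 nat)" where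
  "Zm e s = (if e then E (0, 0, 0) else 0) + (if s then E (1, 0, 0) else 0)"

lemma fcmd_single:
  "(fcmd i e s j \<alpha> \<beta> :: 'a::comm_ring_1 dpoly) =
    Poly_Mapping.single (Zm e s + E (i + 2, if e then 0 else 1, if s then 0 else 1)) 1
  - Poly_Mapping.single (Zm e s + E (j + 2, nat ((if e then 0 else 1) + \<alpha>), nat ((if s then 0 else 1) + \<beta>))) 1"
  unfolding fcmd_def Let_def dD_dgen unfolding Zm_def dgen_def
  by (cases e; cases s) (simp_all add: dX_def mult_single)

lemma swapq:
  assumes "n + E (k1 + 2, p1, q1) = mon c d k a b"
  shows "n = E (0, c, 0) + E (1, 0, d) \<and> k1 = k \<and> p1 = a \<and> q1 = b"
proof -
  have "Poly_Mapping.lookup (mon c d k a b) (k1 + 2, p1, q1) \<noteq> 0"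
    unfolding assms[symmetric] by (rule lookup_plusE)
  from mon_keys[OF this] have eq: "k1 = k" "p1 = a" "q1 = b" by auto
  have "n + E (k + 2, a, b) = (E (0, c, 0) + E (1, 0, d)) + E (k + 2, a, b)"
    using assms unfolding eq mon_def .
  then have "n = E (0, c, 0) + E (1, 0, d)" by simp
  then show ?thesis using eq by simp
qed

lemma Lmon_exchange:
  assumes "\<And>c d. n = E (0, c, 0) + E (1, 0, d) \<Longrightarrow> \<psi> (i, p + c, q + d) = \<psi> (j, p' + c, q' + d)"
  shows "Lmon \<psi> (n + E (i + 2, p, q)) = Lmon \<psi> (n + E (j + 2, p', q'))"
proof (cases "\<exists>c d k a b. n + E (i + 2, p, q) = mon c d k a b")
  case True
  then obtain c d k a b where M: "n + E (i + 2, p, q) = mon c d k a b" by blast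
  from swapq[OF M] have nn: "n = E (0, c, 0) + E (1, 0, d)" and kk: "i = k" "p = a" "q = b" by auto
  have M2: "n + E (j + 2, p', q') = mon c d j p' q'" unfolding nn mon_def ..
  show ?thesis unfolding M M2 Lmon_mon using assms[OF nn] kk by simp
next
  case False
  show ?thesis
  proof (cases "\<exists>c d k a b. n + E (j + 2, p', q') = mon c d k a b")
    case True
    then obtain c d k a b where M: "n + E (j + 2, p', q') = mon c d k a b" by blast
    from swapq[OF M] have nn: "n = E (0, c, 0) + E (1, 0, d)" by auto
    have "n + E (i + 2, p, q) = mon c d i p q" unfolding nn mon_def ..
    then show ?thesis using False by blast
  next
    case False2: False
    have "Lmon \<psi> (n + E (i + 2, p, q)) = 0" by (rule Lmon_other) (use False in blast)
    moreover have "Lmon \<psi> (n + E (j + 2, p', q')) = 0" by (rule Lmon_other) (use False2 in blast)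
    ultimately show ?thesis by simp
  qed
qed

lemma cmd_V:
  assumes prog: "minsky_program n P"
    and P: "P i e s = Some (j, \<alpha>, \<beta>)"
    and H: "\<And>c c'. (c, c') \<in> minsky_step P \<Longrightarrow> \<psi> c = \<psi> c'"
  shows "Lf \<psi> (r * fcmd i e s j \<alpha> \<beta>) = 0"
  unfolding fcmd_single
proof (rule gen_pair)
  fix m
  define p :: nat where "p = (if e then 0 else 1)"
  define q :: nat where "q = (if s then 0 else 1)"
  from prog P have al: "\<alpha> \<in> {-1, 0, 1}" and be: "\<beta> \<in> {-1, 0, 1}"
    and ae: "e \<longrightarrow> \<alpha> \<ge> 0" and bs: "s \<longrightarrow> \<beta> \<ge> 0"
    unfolding minsky_program_def by blast+
  have "Lmon \<psi> ((m + Zm e s) + E (i + 2, p, q)) = Lmon \<psi> ((m + Zm e s) + E (j + 2, nat (int p + \<alpha>), nat (int q + \<beta>)))"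
  proof (rule Lmon_exchange)
    fix c d assume nn: "m + Zm e s = E (0, c, 0) + E (1, 0, d)"
    have ce: "(p + c = 0) = e"
    proof (cases e)
      case True
      then have "Poly_Mapping.lookup (m + Zm e s) (0, 0, 0) \<noteq> 0" by (simp add: Zm_def lookup_add)
      then have "Poly_Mapping.lookup (E (0, c, 0) + E (1, 0, d)) (0, 0, 0) \<noteq> 0" unfolding nn .
      then have "c = 0" by (auto simp: lookup_add lookup_single when_def split: if_splits)
      then show ?thesis using True by (simp add: p_def)
    next
      case False then show ?thesis by (simp add: p_def)
    qed
    have ds: "(q + d = 0) = s"
    proof (cases s)
      case True
      then have "Poly_Mapping.lookup (m + Zm e s) (1, 0, 0) \<noteq> 0" by (simp add: Zm_def lookup_add)
      then have "Poly_Mapping.lookup (E (0, c, 0) + E (1, 0, d)) (1, 0, 0) \<noteq> 0" unfolding nn .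
      then have "d = 0" by (auto simp: lookup_add lookup_single when_def split: if_splits)
      then show ?thesis using True by (simp add: q_def)
    next
      case False then show ?thesis by (simp add: q_def)
    qed
    have a1: "int (nat (int p + \<alpha>) + c) = int (p + c) + \<alpha>"
      using al ae by (cases e) (auto simp: p_def)
    have b1: "int (nat (int q + \<beta>) + d) = int (q + d) + \<beta>"
      using be bs by (cases s) (auto simp: q_def)
    have "((i, p + c, q + d), (j, nat (int p + \<alpha>) + c, nat (int q + \<beta>) + d)) \<in> minsky_step P"
      unfolding minsky_step_def using P ce ds a1 b1 by auto
    then show "\<psi> (i, p + c, q + d) = \<psi> (j, nat (int p + \<alpha>) + c, nat (int q + \<beta>) + d)" by (rule H)
  qed
  then show "Lmon \<psi> (m + (Zm e s + E (i + 2, if e then 0 else 1, if s then 0 else 1))) =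
         Lmon \<psi> (m + (Zm e s + E (j + 2, nat ((if e then 0 else 1) + \<alpha>), nat ((if s then 0 else 1) + \<beta>))))"
    by (simp add: p_def q_def add.assoc)
qed

lemma J_V: "Lf \<psi> (r * delta1 (dgen 1)) = 0" "Lf \<psi> (r * delta2 (dgen 0)) = 0"
proof -
  have "delta1 (dgen 1) = Poly_Mapping.single (E (1, Suc 0, 0)) 1"
    unfolding dgen_def delta1_dX by (simp add: dX_def)
  moreover have "Lmon \<psi> (m + E (1, Suc 0, 0)) = 0" for m
    by (rule Lmon_bad1[OF lookup_plusE])
  ultimately show "Lf \<psi> (r * delta1 (dgen 1)) = 0" using gen_one by metis
next
  have "delta2 (dgen 0) = Poly_Mapping.single (E (0, 0, Suc 0)) 1"
    unfolding dgen_def delta2_dX by (simp add: dX_def)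
  moreover have "Lmon \<psi> (m + E (0, 0, Suc 0)) = 0" for m
    by (rule Lmon_bad2[OF lookup_plusE])
  ultimately show "Lf \<psi> (r * delta2 (dgen 0)) = 0" using gen_one by metis
qed

lemma Lf_Yc: "Lf \<psi> (Yc (i, a, b)) = \<psi> (i, a, b)"
proof -
  have "(Yc (i, a, b) :: 'a dpoly) = Poly_Mapping.single (mon 0 0 i a b) 1"
    by (simp add: Yc_def dgen_def dX_def mult_single mon_def)
  then show ?thesis by (simp add: Lf_single Lmon_mon)
qed


lemma no_step_0: "minsky_program n P \<Longrightarrow> ((0, a, b), c') \<notin> minsky_step P"
  unfolding minsky_step_def minsky_program_def by force

lemma step_det:
  assumes "(c, c1) \<in> minsky_step P" "(c, c2) \<in> minsky_step P"
  shows "c1 = c2"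
proof -
  obtain i a b where c: "c = (i, a, b)" by (cases c) auto
  obtain j1 a1 b1 where c1: "c1 = (j1, a1, b1)" by (cases c1) auto
  obtain j2 a2 b2 where c2: "c2 = (j2, a2, b2)" by (cases c2) auto
  from assms(1) obtain al1 be1 where 1: "P i (a = 0) (b = 0) = Some (j1, al1, be1)"
    "int a1 = int a + al1" "int b1 = int b + be1" unfolding c c1 minsky_step_def by blast
  from assms(2) obtain al2 be2 where 2: "P i (a = 0) (b = 0) = Some (j2, al2, be2)"
    "int a2 = int a + al2" "int b2 = int b + be2" unfolding c c2 minsky_step_def by blast
  from 1(1) 2(1) have "j1 = j2" "al1 = al2" "be1 = be2" by auto
  with 1 2 have "a1 = a2" "b1 = b2" by linarith+
  with \<open>j1 = j2\<close> show ?thesis unfolding c1 c2 by simp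
qed

lemma reach_inv:
  assumes prog: "minsky_program n P" and st: "(c, c') \<in> minsky_step P"
  shows "(c, (0, 1, 0)) \<in> (minsky_step P)\<^sup>* \<longleftrightarrow> (c', (0, 1, 0)) \<in> (minsky_step P)\<^sup>*"
proof
  assume "(c, (0, 1, 0)) \<in> (minsky_step P)\<^sup>*"
  then show "(c', (0, 1, 0)) \<in> (minsky_step P)\<^sup>*"
  proof (cases rule: converse_rtranclE)
    case base
    then show ?thesis using st no_step_0[OF prog] by blast
  next
    case (step y)
    then show ?thesis using step_det[OF st] by blast
  qed
next
  assume "(c', (0, 1, 0)) \<in> (minsky_step P)\<^sup>*"
  then show "(c, (0, 1, 0)) \<in> (minsky_step P)\<^sup>*" using st by (rule converse_rtrancl_into_rtrancl[rotated])
qed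

lemma forever_not_reach:
  assumes prog: "minsky_program n P" and run: "minsky_runs_forever P c"
  shows "(c, (0, 1, 0)) \<notin> (minsky_step P)\<^sup>*"
proof
  assume "(c, (0, 1, 0)) \<in> (minsky_step P)\<^sup>*"
  then have "\<forall>r. r 0 = c \<and> (\<forall>k. (r k, r (Suc k)) \<in> minsky_step P) \<longrightarrow> False"
  proof (induction rule: converse_rtrancl_induct)
    case base
    show ?case using no_step_0[OF prog] by metis
  next
    case (step y z)
    show ?case
    proof (intro allI impI)
      fix r assume r: "r 0 = y \<and> (\<forall>k. (r k, r (Suc k)) \<in> minsky_step P)"
      then have "(y, r 1) \<in> minsky_step P" by (metis One_nat_def)
      then have "r 1 = z" using step_det step(1) by blast
      then have "(\<lambda>k. r (Suc k)) 0 = z \<and> (\<forall>k. ((\<lambda>k. r (Suc k)) k, (\<lambda>k. r (Suc k)) (Suc k)) \<in> minsky_step P)"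
        using r by simp
      then show False using step(3)[THEN spec, of "\<lambda>k. r (Suc k)"] by simp
    qed
  qed
  then show False using run unfolding minsky_runs_forever_def by blast
qed

theorem proposition1:
  fixes n :: nat and P :: minsky_prog and S :: "nat set" and m :: nat
  assumes prog: "minsky_program n P"
    and acyc: "acyclic (minsky_step P)"
    and halts: "\<And>x. x \<in> S \<Longrightarrow> minsky_reaches P (1, 2 ^ 2 ^ x, 0) (0, 1, 0)"
    and loops: "\<And>x. x \<notin> S \<Longrightarrow> minsky_runs_forever P (1, 2 ^ 2 ^ x, 0)"
  shows "(fm m :: 'a::comm_ring_1 dpoly) \<in> {a + b | a b. a \<in> idealI n P \<and> b \<in> idealJ n}
         \<longleftrightarrow> m \<in> S"
proof -
  have set_eq: "{a + b | a b. a \<in> idealI n P \<and> b \<in> idealJ n} = (IJ n P :: 'a dpoly set)"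
    unfolding IJ_def ..
  show ?thesis unfolding set_eq
  proof
    assume mS: "m \<in> S"
    have "(Yc (1, 2 ^ 2 ^ m, 0) - Yc (0, 1, 0) :: 'a dpoly) \<in> IJ n P"
      using reach_IJ[OF prog halts[OF mS, unfolded minsky_reaches_def]] .
    then show "(fm m :: 'a dpoly) \<in> IJ n P" unfolding fm_Yc .
  next
    assume fmIJ: "(fm m :: 'a dpoly) \<in> IJ n P"
    show "m \<in> S"
    proof (rule ccontr)
      assume "m \<notin> S"
      define \<psi> :: "nat \<times> nat \<times> nat \<Rightarrow> 'a" where
        "\<psi> c = of_bool ((c, (0, 1, 0)) \<in> (minsky_step P)\<^sup>*)" for c
      have H: "\<psi> c = \<psi> c'" if "(c, c') \<in> minsky_step P" for c c'
        unfolding \<psi>_def using reach_inv[OF prog that] by simp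
      from fmIJ obtain u w where uw: "(fm m :: 'a dpoly) = u + w" "u \<in> idealI n P" "w \<in> idealJ n"
        unfolding IJ_def by blast
      have "Lf \<psi> (1 * u) = 0"
      proof (rule ideal_V[OF _ uw(2)[unfolded idealI_def]])
        fix g r :: "'a dpoly"
        assume "g \<in> {fcmd i e s j \<alpha> \<beta> | i e s j \<alpha> \<beta>. P i e s = Some (j, \<alpha>, \<beta>)}"
        then obtain i e s j \<alpha> \<beta> where "g = fcmd i e s j \<alpha> \<beta>" "P i e s = Some (j, \<alpha>, \<beta>)" by blast
        then show "Lf \<psi> (r * g) = 0"
          using cmd_V[where \<psi>=\<psi> and r=r and n=n and P=P and i=i and e=e and s=s and j=j and \<alpha>=\<alpha> and \<beta>=\<beta>] prog H
          by blast
      qed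
      moreover have "Lf \<psi> (1 * w) = 0"
      proof (rule ideal_V[OF _ uw(3)[unfolded idealJ_def]])
        fix g r :: "'a dpoly"
        assume "g \<in> {delta1 (dgen 1), delta2 (dgen 0)}"
        then show "Lf \<psi> (r * g) = 0" using J_V by blast
      qed
      ultimately have "Lf \<psi> (fm m) = 0" using uw(1) by (simp add: Lf_add)
      moreover have "Lf \<psi> (fm m) = \<psi> (1, 2 ^ 2 ^ m, 0) - \<psi> (0, 1, 0)"
        unfolding fm_Yc Lf_diff Lf_Yc ..
      moreover have "\<psi> (1, 2 ^ 2 ^ m, 0) = 0"
        unfolding \<psi>_def using forever_not_reach[OF prog loops[OF \<open>m \<notin> S\<close>]] by simp
      moreover have "\<psi> (0, 1, 0) = 1" unfolding \<psi>_def by simp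
      ultimately show False by simp
    qed
  qed
qed

end
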